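(* Let $k$ be any field, let $d_1,\ldots,d_n$ be positive integers, let $A=k[x_1, \ldots, x_n]/(x_1^{d_1}, \ldots, x_n^{d_n})$ and $t = \sum_{i=1}^n (d_i - 1)$. If $m\ge 0$ is an integer with $\max(d_1, \ldots, d_n)>(t+m)/2$, then for all integers $0\le i \le (t-m)/2$ the map $A_i \to A_{i+m}$ given by $f \mapsto f \cdot (x_1+ \dots + x_n)^m$ is injective.
   Context: $A$ is graded by degree, $A=\bigoplus_{i\ge 0}A_i$, with $A_i$ the image of the homogeneous polynomials of degree $i$. *)

theory Defs
  imports Main "HOL-Library.Poly_Mapping"
begin

(* Multivariate polynomials over 'k: finitely supported maps from monomials
 (exponent vectors, nat \<Rightarrow>\<^sub>0 nat, variable j has index j) to coefficients. *)
type_synonym 'k mpoly = "(nat \<Rightarrow>\<^sub>0 nat) \<Rightarrow>\<^sub>0 'k"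

(* The variable x_j (variables are indexed 0..n-1). *)
definition var :: "nat \<Rightarrow> 'k::comm_ring_1 mpoly" where
  "var j = Poly_Mapping.single (Poly_Mapping.single j 1) 1"

definition mdeg :: "(nat \<Rightarrow>\<^sub>0 nat) \<Rightarrow> nat" where
  "mdeg a = (\<Sum>j\<in>Poly_Mapping.keys a. Poly_Mapping.lookup a j)"

definition in_poly_ring :: "nat \<Rightarrow> 'k::comm_ring_1 mpoly \<Rightarrow> bool" where
  "in_poly_ring n f \<longleftrightarrow> (\<forall>a\<in>Poly_Mapping.keys f. Poly_Mapping.keys a \<subseteq> {..<n})"

definition homogeneous :: "nat \<Rightarrow> 'k::comm_ring_1 mpoly \<Rightarrow> bool" where
  "homogeneous i f \<longleftrightarrow> (\<forall>a\<in>Poly_Mapping.keys f. mdeg a = i)"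

definition in_mci_ideal :: "nat \<Rightarrow> (nat \<Rightarrow> nat) \<Rightarrow> 'k::comm_ring_1 mpoly \<Rightarrow> bool" where
  "in_mci_ideal n d f \<longleftrightarrow>
     (\<exists>g. (\<forall>j<n. in_poly_ring n (g j)) \<and> f = (\<Sum>j<n. g j * var j ^ d j))"

end

theory Submission
  imports Defs
begin

lemma lookup_mult_single_add:
  fixes g :: "(nat \<Rightarrow>\<^sub>0 nat) \<Rightarrow>\<^sub>0 'k::comm_ring_1"
  shows "Poly_Mapping.lookup (g * Poly_Mapping.single e 1) (b + e) = Poly_Mapping.lookup g b"
proof -
  have 1: "\<And>a. (\<Sum>q. (Poly_Mapping.lookup (Poly_Mapping.single e (1::'k)) q when b + e = a + q)) = (1 when a = b)"
  proof -
    fix a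
    have "(\<lambda>q. (Poly_Mapping.lookup (Poly_Mapping.single e (1::'k)) q when b + e = a + q)) = (\<lambda>q. (\<lambda>q. (1::'k) when a = b) q when q = e)"
      by (auto simp: lookup_single when_def fun_eq_iff)
    then show "?thesis a" by (simp only: Sum_any_when_equal)
  qed
  have "Poly_Mapping.lookup (g * Poly_Mapping.single e 1) (b + e) = (\<Sum>a. Poly_Mapping.lookup g a * (1 when a = b))"
    by (simp only: lookup_mult 1)
  also have "\<dots> = (\<Sum>a. Poly_Mapping.lookup g a when a = b)"
    by (simp add: mult_when)
  finally show ?thesis by simp
qed

lemma var_pow: "(var j :: 'k::comm_ring_1 mpoly) ^ e = Poly_Mapping.single (Poly_Mapping.single j e) 1"
proof (induction e)
  case 0
  then show ?case by simp
next
  case (Suc e)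
  have "(var j :: 'k mpoly) ^ Suc e = var j * Poly_Mapping.single (Poly_Mapping.single j e) 1"
    by (simp only: power_Suc Suc.IH)
  also have "\<dots> = Poly_Mapping.single (Poly_Mapping.single j 1 + Poly_Mapping.single j e) 1"
    by (simp add: var_def mult_single)
  also have "Poly_Mapping.single j 1 + Poly_Mapping.single j e = Poly_Mapping.single j (Suc e)"
    by (simp add: single_add[symmetric])
  finally show ?case .
qed

definition good :: "nat \<Rightarrow> (nat \<Rightarrow> nat) \<Rightarrow> (nat \<Rightarrow>\<^sub>0 nat) \<Rightarrow> bool" where
  "good n d a \<longleftrightarrow> (\<forall>j<n. Poly_Mapping.lookup a j < d j)"

lemma ideal_keys_bad:
  fixes h :: "'k::comm_ring_1 mpoly"
  assumes "in_mci_ideal n d h" "a \<in> Poly_Mapping.keys h"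
  shows "\<not> good n d a"
proof -
  obtain g where h: "h = (\<Sum>j<n. g j * var j ^ d j)"
    using assms(1) unfolding in_mci_ideal_def by (elim exE conjE)
  have "a \<in> Poly_Mapping.keys (\<Sum>j<n. g j * var j ^ d j)" using assms(2) h by blast
  then obtain j where j: "j < n" "a \<in> Poly_Mapping.keys (g j * var j ^ d j)"
    using keys_sum[of "\<lambda>j. g j * var j ^ d j" "{..<n}"] by blast
  then obtain b c where "a = b + c" "c \<in> Poly_Mapping.keys ((var j :: 'k mpoly) ^ d j)"
    using keys_mult[of "g j" "var j ^ d j"] by blast
  then have "a = b + Poly_Mapping.single j (d j)"
    by (simp add: var_pow split: if_splits)
  then have "Poly_Mapping.lookup a j \<ge> d j" by (simp add: lookup_add)
  then show ?thesis using j(1) unfolding good_def by force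
qed

lemma sum_monomials:
  fixes f :: "'k::comm_ring_1 mpoly"
  shows "f = (\<Sum>a\<in>Poly_Mapping.keys f. Poly_Mapping.single a (Poly_Mapping.lookup f a))"
proof (rule poly_mapping_eqI)
  fix k
  show "Poly_Mapping.lookup f k = Poly_Mapping.lookup (\<Sum>a\<in>Poly_Mapping.keys f. Poly_Mapping.single a (Poly_Mapping.lookup f a)) k"
    by (simp add: lookup_sum lookup_single when_def in_keys_iff)
qed

lemma bad_in_ideal:
  fixes f :: "'k::comm_ring_1 mpoly"
  assumes pr: "in_poly_ring n f" and bad: "\<forall>a\<in>Poly_Mapping.keys f. \<not> good n d a"
  shows "in_mci_ideal n d f"
proof -
  define J where "J a = (SOME j. j < n \<and> d j \<le> Poly_Mapping.lookup a j)" for a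
  have J: "J a < n \<and> d (J a) \<le> Poly_Mapping.lookup a (J a)" if "a \<in> Poly_Mapping.keys f" for a
  proof -
    from bad that have "\<exists>j. j < n \<and> d j \<le> Poly_Mapping.lookup a j"
      unfolding good_def by force
    then show ?thesis unfolding J_def by (rule someI_ex)
  qed
  define g where "g j = (\<Sum>a\<in>{a\<in>Poly_Mapping.keys f. J a = j}.
      Poly_Mapping.single (a - Poly_Mapping.single j (d j)) (Poly_Mapping.lookup f a))" for j
  have prg: "in_poly_ring n (g j)" for j
    unfolding in_poly_ring_def
  proof
    fix b assume "b \<in> Poly_Mapping.keys (g j)"
    then have "b \<in> (\<Union>a\<in>{a\<in>Poly_Mapping.keys f. J a = j}.
        Poly_Mapping.keys (Poly_Mapping.single (a - Poly_Mapping.single j (d j)) (Poly_Mapping.lookup f a)))"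
      using keys_sum[of "\<lambda>a. Poly_Mapping.single (a - Poly_Mapping.single j (d j)) (Poly_Mapping.lookup f a)" "{a\<in>Poly_Mapping.keys f. J a = j}"] unfolding g_def by blast
    then obtain a where a: "a \<in> Poly_Mapping.keys f" "b = a - Poly_Mapping.single j (d j)"
      by (auto split: if_splits)
    have "Poly_Mapping.keys b \<subseteq> Poly_Mapping.keys a"
      using a(2) by (auto simp: in_keys_iff lookup_minus)
    then show "Poly_Mapping.keys b \<subseteq> {..<n}" using pr a(1) unfolding in_poly_ring_def by blast
  qed
  have F: "f = (\<Sum>j<n. g j * var j ^ d j)"
  proof -
    have eq: "g j * var j ^ d j = (\<Sum>a\<in>{a\<in>Poly_Mapping.keys f. J a = j}. Poly_Mapping.single a (Poly_Mapping.lookup f a))" for j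
      unfolding g_def sum_distrib_right var_pow
    proof (rule sum.cong[OF refl])
      fix a assume "a \<in> {a\<in>Poly_Mapping.keys f. J a = j}"
      then have "d j \<le> Poly_Mapping.lookup a j" using J by blast
      then have "a - Poly_Mapping.single j (d j) + Poly_Mapping.single j (d j) = a"
        by (intro poly_mapping_eqI) (auto simp: lookup_add lookup_minus lookup_single when_def)
      then show "Poly_Mapping.single (a - Poly_Mapping.single j (d j)) (Poly_Mapping.lookup f a) *
          Poly_Mapping.single (Poly_Mapping.single j (d j)) 1 = Poly_Mapping.single a (Poly_Mapping.lookup f a)"
        by (simp add: mult_single)
    qed
    have "(\<Sum>j<n. g j * var j ^ d j) = (\<Sum>j<n. (\<Sum>a\<in>{a\<in>Poly_Mapping.keys f. J a = j}. Poly_Mapping.single a (Poly_Mapping.lookup f a)))"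
      by (simp add: eq)
    also have "\<dots> = (\<Sum>a\<in>Poly_Mapping.keys f. Poly_Mapping.single a (Poly_Mapping.lookup f a))"
      by (rule sum.group) (auto simp: J)
    finally show ?thesis using sum_monomials[of f] by simp
  qed
  show ?thesis unfolding in_mci_ideal_def
    apply (rule exI[of _ g])
    apply (rule conjI)
     apply (simp add: prg)
    apply (rule F)
    done
qed

lemma lookup_le_mdeg: "Poly_Mapping.lookup a p \<le> mdeg a"
proof (cases "p \<in> Poly_Mapping.keys a")
  case True
  then show ?thesis unfolding mdeg_def by (intro member_le_sum) auto
next
  case False
  then show ?thesis by (simp add: in_keys_iff)
qed

lemma step:
  fixes g :: "'k::comm_ring_1 mpoly"
  assumes p: "p < n" and a: "a \<in> Poly_Mapping.keys g" "good n d a"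
    and mx: "\<forall>b\<in>Poly_Mapping.keys g. good n d b \<longrightarrow> Poly_Mapping.lookup b p \<le> Poly_Mapping.lookup a p"
    and lt: "Poly_Mapping.lookup a p + 1 < d p"
  defines "c \<equiv> a + Poly_Mapping.single p 1"
  shows "c \<in> Poly_Mapping.keys (g * (\<Sum>j<n. var j))" "good n d c"
    "\<forall>b\<in>Poly_Mapping.keys (g * (\<Sum>j<n. var j)). good n d b \<longrightarrow> Poly_Mapping.lookup b p \<le> Poly_Mapping.lookup c p"
proof -
  have lc: "Poly_Mapping.lookup c i = Poly_Mapping.lookup a i + (if i = p then 1 else 0)" for i
    unfolding c_def by (simp add: lookup_add lookup_single when_def)
  show gc: "good n d c"
    using a(2) lt unfolding good_def by (auto simp: lc)
  have dist: "g * (\<Sum>j<n. var j) = (\<Sum>j<n. g * var j)"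
    by (simp add: sum_distrib_left)
  have key: "\<exists>b'. b' \<in> Poly_Mapping.keys g \<and> b = b' + Poly_Mapping.single j 1"
    if "b \<in> Poly_Mapping.keys (g * var j)" for b j
  proof -
    from that keys_mult[of g "var j"] obtain b' e where "b = b' + e" "b' \<in> Poly_Mapping.keys g"
      "e \<in> Poly_Mapping.keys (var j :: 'k mpoly)" by blast
    then show ?thesis by (auto simp: var_def)
  qed
  have goodb: "good n d b'" if "good n d (b' + Poly_Mapping.single j 1)" for b' j
    using that unfolding good_def by (auto simp: lookup_add)
  show "\<forall>b\<in>Poly_Mapping.keys (g * (\<Sum>j<n. var j)). good n d b \<longrightarrow> Poly_Mapping.lookup b p \<le> Poly_Mapping.lookup c p"
  proof (intro ballI impI)
    fix b assume b: "b \<in> Poly_Mapping.keys (g * (\<Sum>j<n. var j))" "good n d b"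
    then have "b \<in> (\<Union>j\<in>{..<n}. Poly_Mapping.keys (g * var j))"
      using keys_sum[of "\<lambda>j. g * var j" "{..<n}"] unfolding dist by blast
    then obtain j where "b \<in> Poly_Mapping.keys (g * var j)" by blast
    then obtain b' where b': "b' \<in> Poly_Mapping.keys g" "b = b' + Poly_Mapping.single j 1"
      using key by blast
    then have "good n d b'" using goodb b(2) by blast
    then have "Poly_Mapping.lookup b' p \<le> Poly_Mapping.lookup a p" using mx b'(1) by blast
    then show "Poly_Mapping.lookup b p \<le> Poly_Mapping.lookup c p"
      using b'(2) by (simp add: lc lookup_add lookup_single when_def)
  qed
  have zero: "Poly_Mapping.lookup (g * var j) c = 0" if "j \<noteq> p" for j
  proof (rule ccontr)
    assume "Poly_Mapping.lookup (g * var j) c \<noteq> 0"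
    then have "c \<in> Poly_Mapping.keys (g * var j)" by (simp add: in_keys_iff)
    then obtain b' where b': "b' \<in> Poly_Mapping.keys g" "c = b' + Poly_Mapping.single j 1"
      using key by blast
    then have "good n d b'" using goodb gc by metis
    then have "Poly_Mapping.lookup b' p \<le> Poly_Mapping.lookup a p" using mx b'(1) by blast
    moreover have "Poly_Mapping.lookup c p = Poly_Mapping.lookup b' p"
      using b'(2) that by (simp add: lookup_add lookup_single when_def)
    ultimately show False by (simp add: lc)
  qed
  have "Poly_Mapping.lookup (g * (\<Sum>j<n. var j)) c = (\<Sum>j<n. Poly_Mapping.lookup (g * var j) c)"
    unfolding dist by (simp add: lookup_sum)
  also have "\<dots> = Poly_Mapping.lookup (g * var p) c"
  proof -
    have "(\<Sum>j\<in>{..<n} - {p}. Poly_Mapping.lookup (g * var j) c) = 0"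
      by (rule sum.neutral) (use zero in auto)
    then show ?thesis using p by (simp add: sum.remove[of "{..<n}" p])
  qed
  also have "\<dots> = Poly_Mapping.lookup g a"
    unfolding c_def var_def by (rule lookup_mult_single_add)
  finally show "c \<in> Poly_Mapping.keys (g * (\<Sum>j<n. var j))"
    using a(1) by (simp add: in_keys_iff)
qed

lemma iterate:
  fixes f :: "'k::comm_ring_1 mpoly"
  assumes p: "p < n" and a: "a \<in> Poly_Mapping.keys f" "good n d a"
    and mx: "\<forall>b\<in>Poly_Mapping.keys f. good n d b \<longrightarrow> Poly_Mapping.lookup b p \<le> Poly_Mapping.lookup a p"
    and lt: "Poly_Mapping.lookup a p + m < d p"
  shows "k \<le> m \<Longrightarrow> \<exists>c. c \<in> Poly_Mapping.keys (f * (\<Sum>j<n. var j) ^ k) \<and> good n d c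
     \<and> Poly_Mapping.lookup c p = Poly_Mapping.lookup a p + k
     \<and> (\<forall>b\<in>Poly_Mapping.keys (f * (\<Sum>j<n. var j) ^ k). good n d b \<longrightarrow> Poly_Mapping.lookup b p \<le> Poly_Mapping.lookup c p)"
proof (induction k)
  case 0
  then show ?case using a mx by (intro exI[of _ a]) simp
next
  case (Suc k)
  then obtain c where c: "c \<in> Poly_Mapping.keys (f * (\<Sum>j<n. var j) ^ k)" "good n d c"
     "Poly_Mapping.lookup c p = Poly_Mapping.lookup a p + k"
     "\<forall>b\<in>Poly_Mapping.keys (f * (\<Sum>j<n. var j) ^ k). good n d b \<longrightarrow> Poly_Mapping.lookup b p \<le> Poly_Mapping.lookup c p"
    by auto
  have lt': "Poly_Mapping.lookup c p + 1 < d p" using c(3) lt Suc.prems by simp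
  have eq: "f * (\<Sum>j<n. var j) ^ Suc k = (f * (\<Sum>j<n. var j) ^ k) * (\<Sum>j<n. var j)"
    by (simp add: ac_simps)
  have lc: "Poly_Mapping.lookup (c + Poly_Mapping.single p 1) p = Poly_Mapping.lookup a p + Suc k"
    using c(3) by (simp add: lookup_add)
  show ?case unfolding eq
    using step[OF p c(1) c(2) c(4) lt'] lc by blast
qed

theorem theorem2p5:
  fixes n m :: nat and d :: "nat \<Rightarrow> nat"
  assumes "n \<ge> 1"
    and "\<forall>j<n. d j > 0"
    and "2 * Max (d ` {..<n}) > (\<Sum>j<n. (d j - 1)) + m"
  shows "\<forall>i::nat. 2 * int i \<le> int (\<Sum>j<n. (d j - 1)) - int m \<longrightarrow>
          (\<forall>f :: 'k::field mpoly. in_poly_ring n f \<and> homogeneous i f \<longrightarrow>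
             in_mci_ideal n d (f * (\<Sum>j<n. var j) ^ m) \<longrightarrow> in_mci_ideal n d f)"
proof (intro allI impI, elim conjE)
  fix i :: nat and f :: "'k mpoly"
  assume i: "2 * int i \<le> int (\<Sum>j<n. (d j - 1)) - int m"
    and pr: "in_poly_ring n f" and hom: "homogeneous i f"
    and fm: "in_mci_ideal n d (f * (\<Sum>j<n. var j) ^ m)"
  have "Max (d ` {..<n}) \<in> d ` {..<n}" using assms(1) by (intro Max_in) (auto simp: lessThan_empty_iff)
  then obtain p where p: "p < n" "d p = Max (d ` {..<n})" by auto
  show "in_mci_ideal n d f"
  proof (rule ccontr)
    assume nf: "\<not> in_mci_ideal n d f"
    define A where "A = {a\<in>Poly_Mapping.keys f. good n d a}"
    have "A \<noteq> {}" using bad_in_ideal[OF pr] nf unfolding A_def by blast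
    moreover have "finite A" unfolding A_def by simp
    ultimately have "Max ((\<lambda>a. Poly_Mapping.lookup a p) ` A) \<in> (\<lambda>a. Poly_Mapping.lookup a p) ` A"
      by (intro Max_in) auto
    then obtain a where a: "a \<in> A" "Poly_Mapping.lookup a p = Max ((\<lambda>a. Poly_Mapping.lookup a p) ` A)"
      by auto
    have mx: "\<forall>b\<in>Poly_Mapping.keys f. good n d b \<longrightarrow> Poly_Mapping.lookup b p \<le> Poly_Mapping.lookup a p"
      using a(2) \<open>finite A\<close> unfolding A_def by auto
    have "mdeg a = i" using hom a(1) unfolding homogeneous_def A_def by auto
    then have "Poly_Mapping.lookup a p \<le> i" using lookup_le_mdeg[of a p] by simp
    moreover have "i + m < d p" using i assms(3) p(2) by linarith
    ultimately have lt: "Poly_Mapping.lookup a p + m < d p" by simp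
    obtain c where "c \<in> Poly_Mapping.keys (f * (\<Sum>j<n. var j) ^ m)" "good n d c"
      using iterate[OF p(1) _ _ mx lt, of m] a(1) unfolding A_def by blast
    then show False using ideal_keys_bad[OF fm] by blast
  qed
qed

end
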